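(* Let $H\in\mathbb{R}^{n\times d}$ have rank $h$, let $\Sigma\in\mathbb{R}^{n\times n}$ be symmetric positive definite, let $y\in\mathbb{R}^n$, $J\ge 2$, and let $v_0^{(1)},\dots,v_0^{(J)}\in\mathbb{R}^d$ be an initial ensemble. Run deterministic EKI: $$v_{i+1}^{(j)}=v_i^{(j)}+\Gamma_iH^\top(H\Gamma_iH^\top+\Sigma)^{-1}(y-Hv_i^{(j)}),\quad j=1,\dots,J,\ i\ge 0,$$ where $\Gamma_i$ is the empirical covariance of $v_i^{(1)},\dots,v_i^{(J)}$. Let $\theta_i^{(j)}=Hv_i^{(j)}-y$ and let $\mathcal{P},\mathcal{Q},\mathcal{N}$ be the projectors defined in the context. Then for every particle $j=1,\dots,J$: (a) $\|\mathcal{P}\theta_i^{(j)}\|=\mathcal{O}(i^{-1/2})$ as $i\to\infty$; (b) $\mathcal{Q}\theta_i^{(j)}=\mathcal{Q}\theta_0^{(j)}$ for all $i\ge 0$; (c) $\mathcal{N}\theta_i^{(j)}=\mathcal{N}\theta_0^{(j)}$ for all $i\ge 0$.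
   Context: Empirical covariance: $\Gamma_i=\frac{1}{J-1}\sum_{j=1}^J(v_i^{(j)}-\bar v_i)(v_i^{(j)}-\bar v_i)^\top$ with $\bar v_i=\frac1J\sum_j v_i^{(j)}$. Let $r$ be the number of positive eigenvalues of the generalized eigenvalue problem $H\Gamma_0H^\top w=\delta\,\Sigma w$. Let $w_1,\dots,w_n\in\mathbb{R}^n$ be a basis of $\mathbb{R}^n$ with $w_k^\top\Sigma w_l=1$ if $k=l$ and $0$ otherwise, such that: each $w_\ell$ is a generalized eigenvector of the pencil $(H\Gamma_iH^\top,\Sigma)$ for every $i\ge0$; $w_1,\dots,w_r\in\mathsf{Ran}(\Sigma^{-1}H)$ correspond to positive eigenvalues; $w_{r+1},\dots,w_h\in\mathsf{Ran}(\Sigma^{-1}H)$ correspond to the eigenvalue zero; $w_{h+1},\dots,w_n$ form a basis of $\mathsf{Ker}(H^\top)$; and $\mathsf{span}(w_1,\dots,w_h)=\mathsf{Ran}(\Sigma^{-1}H)$. With $W=[w_1,\dots,w_n]$ and $W_{k:l}$ its columns $k$ through $l$, define $\mathcal{P}=\Sigma W_{1:r}W_{1:r}^\top$, $\mathcal{Q}=\Sigma W_{r+1:h}W_{r+1:h}^\top$, $\mathcal{N}=\Sigma W_{h+1:n}W_{h+1:n}^\top$. *)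

theory Defs
  imports "HOL-Analysis.Analysis" "HOL-Library.Landau_Symbols"
begin

definition outer :: "real^'m \<Rightarrow> real^'k \<Rightarrow> real^'k^'m" where
  "outer u v = (\<chi> a b. u $ a * v $ b)"

definition ens_mean :: "nat \<Rightarrow> (nat \<Rightarrow> real^'d) \<Rightarrow> real^'d" where
  "ens_mean J v = (1 / real J) *\<^sub>R (\<Sum>j=1..J. v j)"

definition emp_cov :: "nat \<Rightarrow> (nat \<Rightarrow> real^'d) \<Rightarrow> real^'d^'d" where
  "emp_cov J v = (1 / (real J - 1)) *\<^sub>R
     (\<Sum>j=1..J. outer (v j - ens_mean J v) (v j - ens_mean J v))"

definition eki_step :: "real^'d^'n \<Rightarrow> real^'n^'n \<Rightarrow> real^'n \<Rightarrow> nat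
    \<Rightarrow> (nat \<Rightarrow> real^'d) \<Rightarrow> (nat \<Rightarrow> real^'d)" where
  "eki_step H S y J v = (let G = emp_cov J v in
     (\<lambda>j. v j + (G ** transpose H ** matrix_inv (H ** G ** transpose H + S)) *v (y - H *v v j)))"

primrec eki :: "real^'d^'n \<Rightarrow> real^'n^'n \<Rightarrow> real^'n \<Rightarrow> nat
    \<Rightarrow> (nat \<Rightarrow> real^'d) \<Rightarrow> nat \<Rightarrow> (nat \<Rightarrow> real^'d)" where
  "eki H S y J v0 0 = v0"
| "eki H S y J v0 (Suc i) = eki_step H S y J (eki H S y J v0 i)"

definition eki_cov :: "real^'d^'n \<Rightarrow> real^'n^'n \<Rightarrow> real^'n \<Rightarrow> nat
    \<Rightarrow> (nat \<Rightarrow> real^'d) \<Rightarrow> nat \<Rightarrow> real^'d^'d" where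
  "eki_cov H S y J v0 i = emp_cov J (eki H S y J v0 i)"

text \<open>Sigma W_{a+1:b} W_{a+1:b}^T for the basis w_0,...,w_{n-1} (0-based indexing).\<close>
definition proj_block :: "real^'n^'n \<Rightarrow> (nat \<Rightarrow> real^'n) \<Rightarrow> nat \<Rightarrow> nat \<Rightarrow> real^'n^'n" where
  "proj_block S w a b = S ** (\<Sum>k\<in>{a..<b}. outer (w k) (w k))"

definition sym_pos_def :: "real^'n^'n \<Rightarrow> bool" where
  "sym_pos_def S \<longleftrightarrow> transpose S = S \<and> (\<forall>x. x \<noteq> 0 \<longrightarrow> x \<bullet> (S *v x) > 0)"

end

theory Submission
  imports Defs
begin


lemma inv_props:
  fixes A :: "real^'n^'n"
  assumes "invertible A"
  shows "A ** matrix_inv A = mat 1 \<and> matrix_inv A ** A = mat 1"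
  using assms unfolding matrix_inv_def invertible_def by (rule someI_ex)

lemma pd_invertible:
  fixes A :: "real^'n^'n"
  assumes "\<And>x. x \<noteq> 0 \<Longrightarrow> x \<bullet> (A *v x) > 0"
  shows "invertible A"
proof -
  have "\<forall>x. A *v x = 0 \<longrightarrow> x = 0"
    using assms by (metis inner_zero_right less_irrefl)
  then show ?thesis
    using invertible_left_inverse matrix_left_invertible_ker by blast
qed

lemma inner_mv: "(x::real^'n) \<bullet> (A *v y) = (transpose A *v x) \<bullet> y"
  by (metis dot_lmul_matrix transpose_matrix_vector transpose_transpose)

lemma inner_mv2: "((A::real^'n^'m) *v y) \<bullet> x = y \<bullet> (x v* A)"
  by (metis dot_lmul_matrix inner_commute)

lemma outer_mv: "outer u v *v x = (v \<bullet> x) *\<^sub>R u"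
  by (simp add: vec_eq_iff outer_def matrix_vector_mult_def inner_vec_def sum_distrib_left sum_distrib_right ac_simps)

lemma sum_mv: "(sum f S) *v (x::real^'n) = sum (\<lambda>j. f j *v x) S"
  by (induction S rule: infinite_finite_induct) (auto simp: matrix_vector_mult_add_rdistrib)

lemma scaleR_mv: "(c *\<^sub>R A) *v (x::real^'n) = c *\<^sub>R (A *v x)"
  by (simp add: scaleR_matrix_vector_assoc)

lemma mv_sum: "(A::real^'n^'m) *v (sum f S) = sum (\<lambda>j. A *v f j) S"
  by (induction S rule: infinite_finite_induct) (auto simp: matrix_vector_right_distrib)

lemma cov_mv: "emp_cov J v *v x =
   (1 / (real J - 1)) *\<^sub>R (\<Sum>j=1..J. ((v j - ens_mean J v) \<bullet> x) *\<^sub>R (v j - ens_mean J v))"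
  unfolding emp_cov_def by (simp add: scaleR_mv sum_mv outer_mv)

lemma cov_psd:
  assumes "J \<ge> 2"
  shows "x \<bullet> (emp_cov J v *v x) \<ge> 0"
proof -
  have "x \<bullet> (emp_cov J v *v x) = (1 / (real J - 1)) * (\<Sum>j=1..J. ((v j - ens_mean J v) \<bullet> x)^2)"
    by (simp add: cov_mv inner_sum_right power2_eq_square inner_commute)
  moreover have "1 / (real J - 1) \<ge> 0" using assms by simp
  ultimately show ?thesis by (simp add: sum_nonneg)
qed

lemma mean_affine:
  assumes "J \<ge> 1"
  shows "ens_mean J (\<lambda>j. (B::real^'d^'d) *v v j + b) = B *v ens_mean J v + b"
proof -
  have "(\<Sum>j=1..J. B *v v j + b) = B *v (\<Sum>j=1..J. v j) + real J *\<^sub>R b"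
    by (simp only: sum.distrib mv_sum sum_constant_scaleR card_atLeastAtMost) simp
  then show ?thesis using assms
    by (simp add: ens_mean_def matrix_vector_mult_scaleR scaleR_add_right)
qed

lemma cov_affine:
  assumes "J \<ge> 1"
  shows "emp_cov J (\<lambda>j. (B::real^'d^'d) *v v j + b) = B ** emp_cov J v ** transpose B"
proof -
  have dev: "B *v v j + b - ens_mean J (\<lambda>j. B *v v j + b) = B *v (v j - ens_mean J v)" for j
    using mean_affine[OF assms, of B v b] by (simp add: matrix_vector_mult_diff_distrib)
  show ?thesis
  proof (subst matrix_eq, intro allI)
    fix x
    show "emp_cov J (\<lambda>j. B *v v j + b) *v x = (B ** emp_cov J v ** transpose B) *v x"
      unfolding matrix_vector_mul_assoc[symmetric] cov_mv dev
      by (simp add: matrix_vector_mult_scaleR mv_sum inner_mv2)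
  qed
qed


lemma mm_diff_l: "((A::real^'n^'m) - B) ** C = A ** C - B ** C"
  by (simp add: vec_eq_iff matrix_matrix_mult_def sum_subtractf algebra_simps)
lemma mm_diff_r: "(A::real^'n^'m) ** (B - C) = A ** B - A ** C"
  by (simp add: vec_eq_iff matrix_matrix_mult_def sum_subtractf algebra_simps)
lemma mm_add_r: "((A::real^'n^'m) + B) ** C = A ** C + B ** C"
  by (simp add: vec_eq_iff matrix_matrix_mult_def sum.distrib algebra_simps)
lemma transpose_add: "transpose ((A::real^'n^'m) + B) = transpose A + transpose B"
  by (simp add: vec_eq_iff transpose_def)
lemma cov_sym: "transpose (emp_cov J v) = emp_cov J v"
  by (simp add: vec_eq_iff emp_cov_def transpose_def outer_def mult.commute)

lemma step_facts:
  fixes H :: "real^'d^'n" and S :: "real^'n^'n" and v :: "nat \<Rightarrow> real^'d"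
    and J :: nat and y :: "real^'n"
  assumes SPD: "sym_pos_def S" and J2: "J \<ge> 2"
  defines "G \<equiv> emp_cov J v"
  defines "M \<equiv> H ** G ** transpose H"
  defines "X \<equiv> matrix_inv (M + S)"
  shows "(M + S) ** X = mat 1" "X ** (M + S) = mat 1" "transpose X = X"
    "\<And>x. x \<bullet> (M *v x) \<ge> 0"
    "H *v eki_step H S y J v j - y = S *v (X *v (H *v v j - y))"
    "H ** emp_cov J (eki_step H S y J v) ** transpose H = S ** X ** M ** X ** S"
proof -
  have Ssym: "transpose S = S" and Spos: "\<And>x. x \<noteq> 0 \<Longrightarrow> x \<bullet> (S *v x) > 0"
    using SPD unfolding sym_pos_def_def by auto
  show Mpsd: "x \<bullet> (M *v x) \<ge> 0" for x
  proof -
    have "x \<bullet> (M *v x) = (transpose H *v x) \<bullet> (G *v (transpose H *v x))"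
      unfolding M_def by (simp add: matrix_vector_mul_assoc[symmetric] inner_mv)
    then show ?thesis unfolding G_def using cov_psd[OF J2] by simp
  qed
  have "invertible (M + S)"
  proof (rule pd_invertible)
    fix x :: "real^'n" assume "x \<noteq> 0"
    then show "x \<bullet> ((M + S) *v x) > 0"
      using Mpsd[of x] Spos[of x] by (simp add: matrix_vector_mult_add_rdistrib inner_add_right)
  qed
  then show AX: "(M + S) ** X = mat 1" and XA: "X ** (M + S) = mat 1"
    using inv_props unfolding X_def by auto
  have Msym: "transpose M = M"
    unfolding M_def by (simp add: matrix_transpose_mul cov_sym G_def matrix_mul_assoc)
  have Asym: "transpose (M + S) = M + S" by (simp add: transpose_add Msym Ssym)
  have AXt: "(M + S) ** transpose X = mat 1"
    using arg_cong[OF XA, of transpose] by (simp add: matrix_transpose_mul Asym)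
  have "transpose X = (X ** (M + S)) ** transpose X" using XA by simp
  also have "\<dots> = X ** ((M + S) ** transpose X)" by (simp only: matrix_mul_assoc)
  also have "\<dots> = X" using AXt by simp
  finally show Xsym: "transpose X = X" .
  define K where "K = G ** transpose H ** X"
  have vstep: "eki_step H S y J v = (\<lambda>j. (mat 1 - K ** H) *v v j + K *v y)"
    unfolding eki_step_def K_def X_def M_def G_def Let_def
    by (simp add: fun_eq_iff matrix_vector_mult_diff_distrib matrix_vector_mult_diff_rdistrib
          matrix_vector_mul_assoc)
  have HKH: "H ** K ** H = M ** X ** H"
    unfolding K_def M_def by (simp add: matrix_mul_assoc)
  have "H = ((M + S) ** X) ** H" using AX by simp
  also have "\<dots> = M ** X ** H + S ** X ** H" by (simp add: mm_add_r)
  finally have Hdec: "H = M ** X ** H + S ** X ** H" .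
  have HB: "H ** (mat 1 - K ** H) = S ** X ** H"
  proof -
    have "H - M ** X ** H = S ** X ** H" using Hdec by (metis add_diff_cancel_left')
    then show ?thesis using HKH by (simp add: mm_diff_r matrix_mul_assoc)
  qed
  show "H *v eki_step H S y J v j - y = S *v (X *v (H *v v j - y))"
  proof -
    have "H *v eki_step H S y J v j = (H ** (mat 1 - K ** H)) *v v j + (H ** K) *v y"
      unfolding vstep by (simp add: matrix_vector_right_distrib matrix_vector_mul_assoc)
    also have "(H ** K) *v y = M *v (X *v y)"
      unfolding K_def M_def by (simp add: matrix_vector_mul_assoc matrix_mul_assoc)
    finally have e1: "H *v eki_step H S y J v j = S *v (X *v (H *v v j)) + M *v (X *v y)"
      unfolding HB by (simp add: matrix_vector_mul_assoc matrix_mul_assoc)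
    have "y = M *v (X *v y) + S *v (X *v y)"
      using arg_cong[OF AX, of "\<lambda>A. A *v y"]
      by (simp add: matrix_vector_mul_assoc[symmetric] matrix_vector_mult_add_rdistrib)
    then have e2: "y - M *v (X *v y) = S *v (X *v y)" by (metis add_diff_cancel_left')
    have "H *v eki_step H S y J v j - y = S *v (X *v (H *v v j)) - (y - M *v (X *v y))"
      unfolding e1 by simp
    also have "\<dots> = S *v (X *v (H *v v j - y))"
      unfolding e2 by (simp add: matrix_vector_mult_diff_distrib)
    finally show ?thesis .
  qed
  show "H ** emp_cov J (eki_step H S y J v) ** transpose H = S ** X ** M ** X ** S"
  proof -
    have "emp_cov J (eki_step H S y J v) = (mat 1 - K ** H) ** G ** transpose (mat 1 - K ** H)"
      unfolding vstep G_def using J2 by (simp add: cov_affine)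
    then have "H ** emp_cov J (eki_step H S y J v) ** transpose H
       = (H ** (mat 1 - K ** H)) ** G ** transpose (H ** (mat 1 - K ** H))"
      by (simp add: matrix_transpose_mul matrix_mul_assoc)
    also have "\<dots> = S ** X ** M ** X ** S"
      unfolding HB M_def by (simp add: matrix_transpose_mul matrix_mul_assoc Xsym Ssym)
    finally show ?thesis .
  qed
qed


lemma eig_step:
  fixes M S X :: "real^'n^'n"
  assumes AX: "(M + S) ** X = mat 1" and XA: "X ** (M + S) = mat 1"
    and Xsym: "transpose X = X" and Ssym: "transpose S = S"
    and eig: "M *v w = d *\<^sub>R (S *v w)" and d: "d \<ge> 0"
  shows "X *v (S *v w) = (1 / (1 + d)) *\<^sub>R w"
    "w \<bullet> (S *v (X *v \<theta>)) = (1 / (1 + d)) * (w \<bullet> \<theta>)"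
    "(S ** X ** M ** X ** S) *v w = (d / (1 + d)^2) *\<^sub>R (S *v w)"
proof -
  have "(M + S) *v w = (1 + d) *\<^sub>R (S *v w)"
    using eig by (simp add: matrix_vector_mult_add_rdistrib algebra_simps)
  then have "w = (1 + d) *\<^sub>R (X *v (S *v w))"
    using arg_cong[OF XA, of "\<lambda>A. A *v w"]
    by (simp add: matrix_vector_mul_assoc[symmetric] matrix_vector_mult_scaleR)
  then have "(1 / (1 + d)) *\<^sub>R w = (1 / (1 + d)) *\<^sub>R ((1 + d) *\<^sub>R (X *v (S *v w)))"
    by simp
  then show XS: "X *v (S *v w) = (1 / (1 + d)) *\<^sub>R w" using d by simp
  have "w \<bullet> (S *v (X *v \<theta>)) = (X *v (S *v w)) \<bullet> \<theta>"
    by (simp add: inner_mv Ssym Xsym)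
  then show "w \<bullet> (S *v (X *v \<theta>)) = (1 / (1 + d)) * (w \<bullet> \<theta>)"
    by (simp add: XS)
  have "(S ** X ** M ** X ** S) *v w = S *v (X *v (M *v (X *v (S *v w))))"
    by (simp add: matrix_vector_mul_assoc matrix_mul_assoc)
  also have "\<dots> = (1 / (1 + d)) *\<^sub>R (S *v (X *v (M *v w)))"
    by (simp add: XS matrix_vector_mult_scaleR)
  also have "\<dots> = (d / (1 + d)^2) *\<^sub>R (S *v w)"
    by (simp add: eig XS matrix_vector_mult_scaleR power2_eq_square)
  finally show "(S ** X ** M ** X ** S) *v w = (d / (1 + d)^2) *\<^sub>R (S *v w)" .
qed

lemma proj_mv: "proj_block S w a b *v \<theta> = S *v (\<Sum>k\<in>{a..<b}. (w k \<bullet> \<theta>) *\<^sub>R w k)"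
  unfolding proj_block_def by (simp add: matrix_vector_mul_assoc[symmetric] sum_mv outer_mv)

theorem theorem3p8:
  fixes H :: "real^'d^'n" and S :: "real^'n^'n" and y :: "real^'n"
    and J :: nat and v0 :: "nat \<Rightarrow> real^'d"
    and w :: "nat \<Rightarrow> real^'n" and r h :: nat
  assumes SPD: "sym_pos_def S"
    and J2: "J \<ge> 2"
    and rankH: "rank H = h"
    and rh: "r \<le> h" and hn: "h \<le> CARD('n)"
    and orth: "\<And>k l. k < CARD('n) \<Longrightarrow> l < CARD('n) \<Longrightarrow>
                 w k \<bullet> (S *v w l) = (if k = l then 1 else 0)"
    and eig_all: "\<And>k i. k < CARD('n) \<Longrightarrow>
                 \<exists>\<delta>. (H ** eki_cov H S y J v0 i ** transpose H) *v w k = \<delta> *\<^sub>R (S *v w k)"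
    and pos: "\<And>k. k < r \<Longrightarrow> w k \<in> range (\<lambda>x. matrix_inv S *v (H *v x)) \<and>
                 (\<exists>\<delta>>0. (H ** eki_cov H S y J v0 0 ** transpose H) *v w k = \<delta> *\<^sub>R (S *v w k))"
    and zero: "\<And>k. r \<le> k \<Longrightarrow> k < h \<Longrightarrow> w k \<in> range (\<lambda>x. matrix_inv S *v (H *v x)) \<and>
                 (H ** eki_cov H S y J v0 0 ** transpose H) *v w k = 0"
    and ker: "\<And>k. h \<le> k \<Longrightarrow> k < CARD('n) \<Longrightarrow> transpose H *v w k = 0"
    and ker_span: "span (w ` {h..<CARD('n)}) = {u. transpose H *v u = 0}"
    and ran_span: "span (w ` {0..<h}) = range (\<lambda>x. matrix_inv S *v (H *v x))"
  shows "\<forall>j\<in>{1..J}.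
      (\<lambda>i. norm (proj_block S w 0 r *v (H *v eki H S y J v0 i j - y)))
          \<in> O(\<lambda>i. 1 / sqrt (real i))
    \<and> (\<forall>i. proj_block S w r h *v (H *v eki H S y J v0 i j - y)
            = proj_block S w r h *v (H *v v0 j - y))
    \<and> (\<forall>i. proj_block S w h CARD('n) *v (H *v eki H S y J v0 i j - y)
            = proj_block S w h CARD('n) *v (H *v v0 j - y))"
proof -
  let ?N = "CARD('n)"
  have Ssym: "transpose S = S" using SPD unfolding sym_pos_def_def by auto
  define M where "M i = H ** eki_cov H S y J v0 i ** transpose H" for i
  define X where "X i = matrix_inv (M i + S)" for i
  define \<theta> where "\<theta> i j = H *v eki H S y J v0 i j - y" for i j
  define \<delta> where "\<delta> i k = w k \<bullet> (M i *v w k)" for i k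
  define c where "c i j k = w k \<bullet> \<theta> i j" for i j k
  have AX: "(M i + S) ** X i = mat 1" and XA: "X i ** (M i + S) = mat 1"
    and Xsym: "transpose (X i) = X i" and psd: "x \<bullet> (M i *v x) \<ge> 0"
    and th_step: "\<theta> (Suc i) j = S *v (X i *v \<theta> i j)"
    and M_step: "M (Suc i) = S ** X i ** M i ** X i ** S" for i j x
    using step_facts[OF SPD J2, where v="eki H S y J v0 i"]
    unfolding M_def X_def \<theta>_def eki_cov_def by auto
  have wSw: "w k \<bullet> (S *v w k) = 1" if "k < ?N" for k using orth[OF that that] by simp
  have Meig: "M i *v w k = \<delta> i k *\<^sub>R (S *v w k)" if kN: "k < ?N" for i k
  proof -
    obtain d where d: "M i *v w k = d *\<^sub>R (S *v w k)" using eig_all[OF kN, of i] M_def by auto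
    then have "\<delta> i k = d" unfolding \<delta>_def using wSw[OF kN] by simp
    then show ?thesis using d by simp
  qed
  have dnn: "\<delta> i k \<ge> 0" for i k unfolding \<delta>_def using psd by simp
  note ES = eig_step[OF AX XA Xsym Ssym Meig dnn]
  have crec: "c (Suc i) j k = c i j k / (1 + \<delta> i k)" if "k < ?N" for i j k
    unfolding c_def th_step using ES(2)[OF that] by simp
  have drec: "\<delta> (Suc i) k = \<delta> i k / (1 + \<delta> i k)^2" if "k < ?N" for i k
    unfolding \<delta>_def[of "Suc i"] M_step using ES(3)[OF that] wSw[OF that]
    by (simp add: \<delta>_def)
  have const: "c i j k = c 0 j k" if "k < ?N" "\<And>i. \<delta> i k = 0" for i j k
    using that by (induction i) (auto simp: crec)
  have dz: "\<delta> i k = 0" if "r \<le> k" "k < ?N" for i k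
  proof (cases "k < h")
    case True
    have "\<delta> 0 k = 0" using zero[OF that(1) True] unfolding \<delta>_def M_def by simp
    then show ?thesis by (induction i) (auto simp: drec that(2))
  next
    case False
    then have "transpose H *v w k = 0" using ker that by simp
    then show ?thesis unfolding \<delta>_def M_def by (simp add: matrix_vector_mul_assoc[symmetric])
  qed
  have projeq: "proj_block S w a b *v \<theta> i j = proj_block S w a b *v \<theta> 0 j"
    if "r \<le> a" "b \<le> ?N" for a b i j
  proof -
    have "c i j k = c 0 j k" if "k \<in> {a..<b}" for k
      using const[of k] dz[of k] that \<open>r \<le> a\<close> \<open>b \<le> ?N\<close> by auto
    then show ?thesis unfolding proj_mv c_def[symmetric] by simp
  qed
  have th0: "\<theta> 0 j = H *v v0 j - y" for j unfolding \<theta>_def by simp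
  have partA: "(\<lambda>i. norm (proj_block S w 0 r *v \<theta> i j)) \<in> O(\<lambda>i. 1 / sqrt (real i))" for j
  proof -
    define K where "K k = sqrt ((c 0 j k)^2 / \<delta> 0 k)" for k
    have cbound: "\<bar>c i j k\<bar> \<le> K k / sqrt (real i)" if "k < r" "i \<ge> 1" for i k
    proof -
      have kN: "k < ?N" using that rh hn by simp
      have kr: "k < r" by fact
      obtain d where d: "d > 0" "M 0 *v w k = d *\<^sub>R (S *v w k)"
        using pos[OF kr] unfolding M_def by auto
      have d0: "\<delta> 0 k > 0" using d wSw[OF kN] unfolding \<delta>_def by simp
      have dpos: "\<delta> i k > 0" for i
        by (induction i) (auto simp: drec[OF kN] d0)
      have dinv: "1 / \<delta> i k \<ge> 2 * real i" for i
      proof (induction i)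
        case (Suc i)
        have "1 / \<delta> (Suc i) k = 1 / \<delta> i k + 2 + \<delta> i k"
          using dpos[of i] by (simp add: drec[OF kN] field_simps power2_eq_square)
        then show ?case using Suc dnn[of i k] by simp
      qed (simp add: dnn)
      have inv: "(c i j k)^2 / \<delta> i k = (c 0 j k)^2 / \<delta> 0 k" for i
      proof (induction i)
        case (Suc i)
        have "(c (Suc i) j k)^2 / \<delta> (Suc i) k = (c i j k)^2 / \<delta> i k"
          using dpos[of i] dnn[of i k]
          by (simp add: drec[OF kN] crec[OF kN] power_divide)
        then show ?case using Suc by simp
      qed simp
      have ceq: "(c i j k)^2 = (K k)^2 * \<delta> i k"
        unfolding K_def using inv[of i] dpos[of i] d0
        by (simp add: field_simps)
      have dle: "\<delta> i k \<le> 1 / real i"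
      proof -
        have "2 * real i \<le> 1 / \<delta> i k" by (rule dinv)
        then have "real i \<le> 1 / \<delta> i k" by simp
        then show ?thesis using dpos[of i] that(2)
          by (simp add: field_simps)
      qed
      have "(c i j k)^2 \<le> (K k)^2 * (1 / real i)"
        unfolding ceq by (rule mult_left_mono[OF dle]) simp
      also have "\<dots> = (K k / sqrt (real i))^2"
        using that(2) by (simp add: power_divide)
      finally have "(c i j k)^2 \<le> (K k / sqrt (real i))^2" .
      moreover have "K k / sqrt (real i) \<ge> 0" using d0 unfolding K_def by (simp add: divide_nonneg_nonneg)
      ultimately show ?thesis
        by (metis abs_le_square_iff abs_of_nonneg)
    qed
    define C where "C = (\<Sum>k<r. K k * norm (S *v w k))"
    show ?thesis
    proof (rule bigoI[where c = C])
      show "\<forall>\<^sub>F i in at_top. norm (norm (proj_block S w 0 r *v \<theta> i j)) \<le> C * norm (1 / sqrt (real i))"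
        unfolding eventually_at_top_linorder
      proof (intro exI allI impI)
        fix i :: nat assume i1: "i \<ge> 1"
        have "norm (proj_block S w 0 r *v \<theta> i j) = norm (\<Sum>k<r. c i j k *\<^sub>R (S *v w k))"
          unfolding proj_mv c_def by (simp add: mv_sum matrix_vector_mult_scaleR atLeast0LessThan)
        also have "\<dots> \<le> (\<Sum>k<r. \<bar>c i j k\<bar> * norm (S *v w k))"
          by (rule order_trans[OF norm_sum]) simp
        also have "\<dots> \<le> (\<Sum>k<r. K k / sqrt (real i) * norm (S *v w k))"
          by (rule sum_mono, rule mult_right_mono) (auto intro!: cbound[OF _ i1])
        also have "\<dots> = C * norm (1 / sqrt (real i))"
          unfolding C_def by (simp add: sum_divide_distrib)
        finally show "norm (norm (proj_block S w 0 r *v \<theta> i j)) \<le> C * norm (1 / sqrt (real i))"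
          by simp
      qed
    qed
  qed
  show ?thesis
    using partA projeq[of r h] projeq[of h ?N] rh hn unfolding \<theta>_def by simp
qed

end
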